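(* Let $P$ be a finite nonempty set of points lying in a single quadrant $Q$ with respect to the origin $s$, and let $e\ne s$ be such that the line $\overline{se}$ is in the quadrant $Q$ but lies outside the two bounding lines, i.e. $\theta_{s,e}>\theta_{ub}$ or $\theta_{s,e}<\theta_{lb}$. Then, with $d^{\max}=\max_{p\in P} d(p,\overline{se})$, $$d^{\max} \ge \max\Big\{ \min\{d(l_1,\overline{se}),d(l_2,\overline{se})\},\ \min\{d(u_1,\overline{se}),d(u_2,\overline{se})\},\ D\Big\},$$ where $D = d(c_n,\overline{se})$ if $d(s,e) < d(s,c_f)$ and $D = d(c_f,\overline{se})$ if $d(s,e)\ge d(s,c_f)$; and $$d^{\max} \le \max\{ d(l_1,\overline{se}),d(l_2,\overline{se}),d(u_1,\overline{se}),d(u_2,\overline{se}),\ d(c_f,\overline{se})\}.$$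
   Context: Bounded Quadrant System (BQS) setup. Points are in the plane with UTM-projected $x$ and $y$ axes, and the start point $s$ is taken as the origin. For a point $p\ne s$, $\theta(p)\in[0,2\pi)$ is the angle between the positive $x$ axis and the vector from $s$ to $p$; $\theta_{s,e}=\theta(e)$. The four quadrants are $Q_k=\{p\neq s: (k-1)\pi/2 \le \theta(p) < k\pi/2\}$, $k=1,\dots,4$; quadrant $Q_k$ has angle range $[\theta^Q_{start},\theta^Q_{end}) = [(k-1)\pi/2,k\pi/2)$. A line $\overline{se}$ is "in" quadrant $Q$ if $\theta^Q_{start}\le \theta_{s,e}<\theta^Q_{end}$. For a finite nonempty $P\subset Q$: the bounding box is the smallest closed axis-parallel rectangle containing $P$, with corners $c_1,\dots,c_4$; $c_n$ and $c_f$ are the corners of the box nearest to and farthest from the origin $s$ (e.g. in the first quadrant $c_n=(x_{\min},y_{\min})$, $c_f=(x_{\max},y_{\max})$). $\theta_{lb}=\min_{p\in P}\theta(p)$ and $\theta_{ub}=\max_{p\in P}\theta(p)$; the lower (resp. upper) bounding line is the ray from $s$ at angle $\theta_{lb}$ (resp. $\theta_{ub}$). $l_1,l_2$ are the intersection points of the lower bounding line with the boundary of the bounding box and $u_1,u_2$ those of the upper bounding line, with index 1 the intersection nearer to $s$ (they may coincide). $d(p,\overline{se})$ is the Euclidean distance from the point $p$ to the line segment from $s$ to $e$. *)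

theory Defs
  imports "HOL-Analysis.Analysis"
begin

type_synonym pt = "real \<times> real"

text \<open>Start point s is the origin (0,0). Angle theta(p) in [0,2pi).\<close>
definition theta :: "pt \<Rightarrow> real" where
  "theta p = Arg2pi (Complex (fst p) (snd p))"

definition quadrant :: "nat \<Rightarrow> pt set" where
  "quadrant k = {p. p \<noteq> 0 \<and> (real k - 1) * pi / 2 \<le> theta p \<and> theta p < real k * pi / 2}"

definition dseg :: "pt \<Rightarrow> pt \<Rightarrow> real" where
  "dseg p e = infdist p (closed_segment 0 e)"

definition xmin :: "pt set \<Rightarrow> real" where "xmin P = Min (fst ` P)"
definition xmax :: "pt set \<Rightarrow> real" where "xmax P = Max (fst ` P)"
definition ymin :: "pt set \<Rightarrow> real" where "ymin P = Min (snd ` P)"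
definition ymax :: "pt set \<Rightarrow> real" where "ymax P = Max (snd ` P)"

definition bbox :: "pt set \<Rightarrow> pt set" where
  "bbox P = {(x, y). xmin P \<le> x \<and> x \<le> xmax P \<and> ymin P \<le> y \<and> y \<le> ymax P}"

definition corners :: "pt set \<Rightarrow> pt set" where
  "corners P = {(x, y). x \<in> {xmin P, xmax P} \<and> y \<in> {ymin P, ymax P}}"

definition nearest :: "pt set \<Rightarrow> pt" where
  "nearest S = (SOME c. c \<in> S \<and> (\<forall>c'\<in>S. norm c \<le> norm c'))"
definition farthest :: "pt set \<Rightarrow> pt" where
  "farthest S = (SOME c. c \<in> S \<and> (\<forall>c'\<in>S. norm c' \<le> norm c))"

definition c_n :: "pt set \<Rightarrow> pt" where "c_n P = nearest (corners P)"
definition c_f :: "pt set \<Rightarrow> pt" where "c_f P = farthest (corners P)"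

definition theta_lb :: "pt set \<Rightarrow> real" where "theta_lb P = Min (theta ` P)"
definition theta_ub :: "pt set \<Rightarrow> real" where "theta_ub P = Max (theta ` P)"

definition ray :: "real \<Rightarrow> pt set" where
  "ray t = {r *\<^sub>R (cos t, sin t) | r. r \<ge> 0}"

text \<open>Intersection points of the bounding lines with the boundary of the box;
  index 1 = nearer to s, index 2 = farther (they may coincide).\<close>
definition l1 :: "pt set \<Rightarrow> pt" where "l1 P = nearest (ray (theta_lb P) \<inter> frontier (bbox P))"
definition l2 :: "pt set \<Rightarrow> pt" where "l2 P = farthest (ray (theta_lb P) \<inter> frontier (bbox P))"
definition u1 :: "pt set \<Rightarrow> pt" where "u1 P = nearest (ray (theta_ub P) \<inter> frontier (bbox P))"
definition u2 :: "pt set \<Rightarrow> pt" where "u2 P = farthest (ray (theta_ub P) \<inter> frontier (bbox P))"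

end

theory Submission
  imports Defs
begin


lemma dseg_seg:
  assumes "x \<in> closed_segment u v"
  shows "dseg x e \<le> max (dseg u e) (dseg v e)"
proof -
  let ?S = "closed_segment (0::pt) e"
  have cl: "closed ?S" "?S \<noteq> {}" by auto
  obtain pu where pu: "pu \<in> ?S" "dseg u e = dist u pu"
    using infdist_attains_inf[OF cl, of u] unfolding dseg_def by blast
  obtain pv where pv: "pv \<in> ?S" "dseg v e = dist v pv"
    using infdist_attains_inf[OF cl, of v] unfolding dseg_def by blast
  obtain t where t: "0 \<le> t" "t \<le> 1" "x = (1 - t) *\<^sub>R u + t *\<^sub>R v"
    using assms by (auto simp: in_segment)
  define w where "w = (1 - t) *\<^sub>R pu + t *\<^sub>R pv"
  have wS: "w \<in> ?S" unfolding w_def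
    using convexD_alt[OF convex_closed_segment pu(1) pv(1) t(1) t(2)] by simp
  have "x - w = (1 - t) *\<^sub>R (u - pu) + t *\<^sub>R (v - pv)"
    unfolding w_def t(3) by (simp add: algebra_simps)
  hence "dist x w \<le> (1 - t) * dist u pu + t * dist v pv"
    using t(1,2) norm_triangle_ineq[of "(1 - t) *\<^sub>R (u - pu)" "t *\<^sub>R (v - pv)"]
    by (simp add: dist_norm)
  also have "\<dots> \<le> (1 - t) * max (dseg u e) (dseg v e) + t * max (dseg u e) (dseg v e)"
    using t(1,2) pu pv by (intro add_mono mult_left_mono) auto
  also have "\<dots> = max (dseg u e) (dseg v e)" by (simp add: algebra_simps)
  finally show ?thesis unfolding dseg_def using wS infdist_le order_trans by blast
qed

lemma dseg_zero: "dseg 0 e = 0"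
  unfolding dseg_def by simp

lemma dseg_nonneg: "dseg p e \<ge> 0"
  unfolding dseg_def by (simp add: infdist_nonneg)

lemma dseg_scale:
  assumes "0 \<le> c" "c \<le> 1"
  shows "dseg (c *\<^sub>R p) e \<le> dseg p e"
proof -
  have "c *\<^sub>R p \<in> closed_segment 0 p" using assms by (auto simp: in_segment)
  from dseg_seg[OF this, of e] show ?thesis using dseg_zero[of e] dseg_nonneg[of p e] by simp
qed



lemma seg_h:
  fixes a b x y :: real
  assumes "a \<le> x" "x \<le> b"
  shows "(x, y) \<in> closed_segment (a, y) (b, y)"
proof (cases "a = b")
  case True then show ?thesis using assms by auto
next
  case False
  hence ab: "a < b" using assms by auto
  define u where "u = (x - a) / (b - a)"
  have u: "0 \<le> u" "u \<le> 1" using assms ab by (auto simp: u_def field_simps)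
  have e0: "u * (b - a) = x - a" using ab by (simp add: u_def)
  have e1: "(1 - u) * a + u * b = x" using e0 by (simp add: algebra_simps)
  have "(x, y) = (1 - u) *\<^sub>R (a, y) + u *\<^sub>R (b, y)"
    using e1 by (simp add: algebra_simps)
  thus ?thesis using u by (auto simp: in_segment)
qed

lemma seg_v:
  fixes a b x y :: real
  assumes "a \<le> y" "y \<le> b"
  shows "(x, y) \<in> closed_segment (x, a) (x, b)"
proof (cases "a = b")
  case True then show ?thesis using assms by auto
next
  case False
  hence ab: "a < b" using assms by auto
  define u where "u = (y - a) / (b - a)"
  have u: "0 \<le> u" "u \<le> 1" using assms ab by (auto simp: u_def field_simps)
  have e0: "u * (b - a) = y - a" using ab by (simp add: u_def)
  have e1: "(1 - u) * a + u * b = y" using e0 by (simp add: algebra_simps)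
  have "(x, y) = (1 - u) *\<^sub>R (x, a) + u *\<^sub>R (x, b)"
    using e1 by (simp add: algebra_simps)
  thus ?thesis using u by (auto simp: in_segment)
qed

lemma seg_pt: "0 \<le> u \<Longrightarrow> u \<le> 1 \<Longrightarrow> u *\<^sub>R e \<in> closed_segment 0 e"
  by (auto simp: in_segment)

lemma dseg_low_y:
  assumes "\<forall>w \<in> closed_segment (0::pt) e. snd w \<le> c"
  shows "snd p - c \<le> dseg p e"
proof -
  have cl: "closed (closed_segment (0::pt) e)" "closed_segment (0::pt) e \<noteq> {}" by auto
  obtain w where w: "w \<in> closed_segment 0 e" "dseg p e = dist p w"
    using infdist_attains_inf[OF cl, of p] unfolding dseg_def by blast
  have "snd p - snd w \<le> dist (snd p) (snd w)" by (simp add: dist_real_def)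
  also have "\<dots> \<le> dist p w" by (rule dist_snd_le)
  finally show ?thesis using w assms by force
qed

lemma dseg_low_x:
  assumes "\<forall>w \<in> closed_segment (0::pt) e. fst w \<le> c"
  shows "fst p - c \<le> dseg p e"
proof -
  have cl: "closed (closed_segment (0::pt) e)" "closed_segment (0::pt) e \<noteq> {}" by auto
  obtain w where w: "w \<in> closed_segment 0 e" "dseg p e = dist p w"
    using infdist_attains_inf[OF cl, of p] unfolding dseg_def by blast
  have "fst p - fst w \<le> dist (fst p) (fst w)" by (simp add: dist_real_def)
  also have "\<dots> \<le> dist p w" by (rule dist_fst_le)
  finally show ?thesis using w assms by force
qed

lemma seg_snd_le: assumes "snd e \<ge> 0" shows "\<forall>w \<in> closed_segment (0::pt) e. snd w \<le> snd e"
proof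
  fix w assume "w \<in> closed_segment (0::pt) e"
  then obtain u where "0 \<le> u" "u \<le> 1" "w = u *\<^sub>R e" by (auto simp: in_segment)
  then show "snd w \<le> snd e" using assms by (simp add: mult_left_le_one_le)
qed
lemma seg_fst_le: assumes "fst e \<ge> 0" shows "\<forall>w \<in> closed_segment (0::pt) e. fst w \<le> fst e"
proof
  fix w assume "w \<in> closed_segment (0::pt) e"
  then obtain u where "0 \<le> u" "u \<le> 1" "w = u *\<^sub>R e" by (auto simp: in_segment)
  then show "fst w \<le> fst e" using assms by (simp add: mult_left_le_one_le)
qed

lemma Dn:
  fixes x0 y0 x1 ex ey :: real
  assumes "ex \<ge> 0" "ey \<ge> 0" "0 \<le> y0" "x0 * ey > y0 * ex" "x0 \<le> x1"
  shows "dseg (x0, y0) (ex, ey) \<le> dseg (x1, y0) (ex, ey)"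
proof -
  have "y0 * ex \<ge> 0" using assms by simp
  hence ey: "ey > 0" using assms(2,4) by (cases "ey = 0") auto
  show ?thesis
  proof (cases "y0 \<le> ey")
    case True
    define w where "w = (y0 / ey) *\<^sub>R (ex, ey)"
    have w0: "dseg w (ex, ey) = 0" unfolding w_def dseg_def
      using True ey assms(3) by (intro infdist_zero seg_pt) auto
    have wx: "w = (y0 * ex / ey, y0)" using ey by (simp add: w_def)
    have "y0 * ex / ey \<le> x0" using ey assms(4) by (simp add: field_simps)
    hence "(x0, y0) \<in> closed_segment w (x1, y0)" unfolding wx by (intro seg_h) (use assms in auto)
    from dseg_seg[OF this, of "(ex,ey)"] show ?thesis using w0 dseg_nonneg[of "(x1,y0)"] by simp
  next
    case False
    define z where "z = (ex, y0)"
    have "dseg z (ex, ey) \<le> dist z (ex, ey)" unfolding dseg_def by (rule infdist_le) auto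
    also have "\<dots> = y0 - ey" using False by (simp add: z_def dist_Pair_Pair dist_real_def)
    also have "\<dots> \<le> dseg (x1, y0) (ex, ey)"
      using dseg_low_y[OF seg_snd_le[of "(ex,ey)"], of "(x1,y0)"] assms by simp
    finally have zle: "dseg z (ex, ey) \<le> dseg (x1, y0) (ex, ey)" .
    have "y0 * ex \<ge> ey * ex" using False assms(1) by (simp add: mult_right_mono)
    hence "x0 * ey > ex * ey" using assms(4) by (simp add: mult.commute)
    hence "ex \<le> x0" using ey by simp
    hence "(x0, y0) \<in> closed_segment z (x1, y0)" unfolding z_def by (intro seg_h) (use assms in auto)
    from dseg_seg[OF this, of "(ex,ey)"] show ?thesis using zle by simp
  qed
qed

lemma Df:
  fixes x0 y0 y1 ex ey :: real
  assumes "ex \<ge> 0" "ey \<ge> 0" "0 \<le> x0" "y1 \<le> y0" "x0 * ey > y0 * ex"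
    "x0^2 + y0^2 \<le> ex^2 + ey^2"
  shows "dseg (x0, y0) (ex, ey) \<le> dseg (x0, y1) (ex, ey)"
proof (cases "x0 \<le> ex")
  case True
  have ex: "ex > 0"
  proof (rule ccontr)
    assume "\<not> ex > 0" hence "ex = 0" using assms by simp
    thus False using True assms by simp
  qed
  define w where "w = (x0 / ex) *\<^sub>R (ex, ey)"
  have w0: "dseg w (ex, ey) = 0" unfolding w_def dseg_def
    using True ex assms(3) by (intro infdist_zero seg_pt) auto
  have wx: "w = (x0, x0 * ey / ex)" using ex by (simp add: w_def)
  have "y0 \<le> x0 * ey / ex" using ex assms(5) by (simp add: field_simps)
  hence "(x0, y0) \<in> closed_segment (x0, y1) w" unfolding wx by (intro seg_v) (use assms in auto)
  from dseg_seg[OF this, of "(ex,ey)"] show ?thesis using w0 dseg_nonneg[of "(x0,y1)"] by simp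
next
  case False
  have "ex^2 < x0^2" using False assms(1) by (simp add: power_strict_mono)
  hence "y0^2 < ey^2" using assms(6) by simp
  hence y0e: "y0 \<le> ey" using assms(2) by (smt (verit) power2_less_imp_less)
  define z where "z = (x0, ey)"
  have "dseg z (ex, ey) \<le> dist z (ex, ey)" unfolding dseg_def by (rule infdist_le) auto
  also have "\<dots> = x0 - ex" using False by (simp add: z_def dist_Pair_Pair dist_real_def)
  also have "\<dots> \<le> dseg (x0, y1) (ex, ey)"
    using dseg_low_x[OF seg_fst_le[of "(ex,ey)"], of "(x0,y1)"] assms by simp
  finally have zle: "dseg z (ex, ey) \<le> dseg (x0, y1) (ex, ey)" .
  have "(x0, y0) \<in> closed_segment (x0, y1) z" unfolding z_def by (intro seg_v) (use assms y0e in auto)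
  from dseg_seg[OF this, of "(ex,ey)"] show ?thesis using zle by simp
qed



definition cr :: "pt \<Rightarrow> pt \<Rightarrow> real" where "cr p q = fst p * snd q - snd p * fst q"
definition rayv :: "pt \<Rightarrow> pt set" where "rayv a = {t *\<^sub>R a | t. t \<ge> 0}"
definition isnear :: "pt set \<Rightarrow> pt \<Rightarrow> bool" where
  "isnear S c \<longleftrightarrow> c \<in> S \<and> (\<forall>c'\<in>S. norm c \<le> norm c')"
definition isfar :: "pt set \<Rightarrow> pt \<Rightarrow> bool" where
  "isfar S c \<longleftrightarrow> c \<in> S \<and> (\<forall>c'\<in>S. norm c' \<le> norm c)"

lemma front_below:
  fixes S :: "pt set"
  assumes "0 \<notin> S" "t0 \<ge> 0" "t0 *\<^sub>R a \<in> S"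
  shows "\<exists>t. 0 \<le> t \<and> t \<le> t0 \<and> t *\<^sub>R a \<in> frontier S"
proof -
  have "closed_segment 0 (t0 *\<^sub>R a) \<inter> frontier S \<noteq> {}"
    by (rule connected_Int_frontier) (use assms in auto)
  then obtain x where x: "x \<in> closed_segment 0 (t0 *\<^sub>R a)" "x \<in> frontier S" by blast
  then obtain u where u: "0 \<le> u" "u \<le> 1" "x = (u * t0) *\<^sub>R a" by (auto simp: in_segment)
  have "u * t0 \<le> t0" using u assms(2) by (simp add: mult_left_le_one_le)
  thus ?thesis using u x assms(2) by (intro exI[of _ "u * t0"]) auto
qed

lemma front_above:
  fixes S :: "pt set"
  assumes "bounded S" "a \<noteq> 0" "t0 \<ge> 0" "t0 *\<^sub>R a \<in> S"
  shows "\<exists>t. t0 \<le> t \<and> t *\<^sub>R a \<in> frontier S"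
proof -
  obtain B where B: "\<forall>x\<in>S. norm x \<le> B" using assms(1) bounded_iff by blast
  have na: "norm a > 0" using assms(2) by simp
  define M where "M = t0 + (\<bar>B\<bar> + 1) / norm a"
  have M0: "M \<ge> t0" using na by (simp add: M_def)
  have "norm (M *\<^sub>R a) = M * norm a" using M0 assms(3) by simp
  also have "\<dots> \<ge> (\<bar>B\<bar> + 1)" using na assms(3) by (simp add: M_def field_simps)
  finally have "M *\<^sub>R a \<notin> S" using B by force
  have "closed_segment (t0 *\<^sub>R a) (M *\<^sub>R a) \<inter> frontier S \<noteq> {}"
    by (rule connected_Int_frontier) (use assms \<open>M *\<^sub>R a \<notin> S\<close> in auto)
  then obtain x where x: "x \<in> closed_segment (t0 *\<^sub>R a) (M *\<^sub>R a)" "x \<in> frontier S" by blast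
  then obtain u where u: "0 \<le> u" "u \<le> 1" "x = (1 - u) *\<^sub>R (t0 *\<^sub>R a) + u *\<^sub>R (M *\<^sub>R a)"
    by (auto simp: in_segment)
  have xe: "x = ((1 - u) * t0 + u * M) *\<^sub>R a" using u(3) by (simp add: algebra_simps)
  have "(1 - u) * t0 + u * M \<ge> (1 - u) * t0 + u * t0" using u M0 by (simp add: mult_left_mono)
  hence "(1 - u) * t0 + u * M \<ge> t0" by (simp add: algebra_simps)
  thus ?thesis using x xe by blast
qed

locale q1set =
  fixes P :: "pt set"
  assumes fin: "finite P" and ne: "P \<noteq> {}" and q1: "\<forall>p\<in>P. fst p > 0 \<and> snd p \<ge> 0"
begin

lemma xmin_le: "p \<in> P \<Longrightarrow> xmin P \<le> fst p" unfolding xmin_def using fin by simp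
lemma xmax_ge: "p \<in> P \<Longrightarrow> fst p \<le> xmax P" unfolding xmax_def using fin by simp
lemma ymin_le: "p \<in> P \<Longrightarrow> ymin P \<le> snd p" unfolding ymin_def using fin by simp
lemma ymax_ge: "p \<in> P \<Longrightarrow> snd p \<le> ymax P" unfolding ymax_def using fin by simp
lemma xmin_in: "\<exists>p\<in>P. fst p = xmin P" unfolding xmin_def using fin ne
  by (metis (mono_tags, lifting) Min_in finite_imageI image_iff image_is_empty)
lemma xmax_in: "\<exists>p\<in>P. fst p = xmax P" unfolding xmax_def using fin ne
  by (metis (mono_tags, lifting) Max_in finite_imageI image_iff image_is_empty)
lemma ymin_in: "\<exists>p\<in>P. snd p = ymin P" unfolding ymin_def using fin ne
  by (metis (mono_tags, lifting) Min_in finite_imageI image_iff image_is_empty)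
lemma ymax_in: "\<exists>p\<in>P. snd p = ymax P" unfolding ymax_def using fin ne
  by (metis (mono_tags, lifting) Max_in finite_imageI image_iff image_is_empty)

lemma xmin_pos: "xmin P > 0" using xmin_in q1 by force
lemma ymin_nn: "ymin P \<ge> 0" using ymin_in q1 by force
lemma xmm: "xmin P \<le> xmax P" using xmin_in xmax_ge by force
lemma ymm: "ymin P \<le> ymax P" using ymin_in ymax_ge by force

lemma in_bbox: "q \<in> bbox P \<longleftrightarrow> xmin P \<le> fst q \<and> fst q \<le> xmax P \<and> ymin P \<le> snd q \<and> snd q \<le> ymax P"
  by (cases q) (simp add: bbox_def)

lemma bbox_eq: "bbox P = {xmin P..xmax P} \<times> {ymin P..ymax P}"
  by (auto simp: in_bbox)

lemma bbox_compact: "compact (bbox P)"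
  unfolding bbox_eq by (intro compact_Times compact_Icc)

lemma zero_notin: "(0::pt) \<notin> bbox P" using xmin_pos by (simp add: in_bbox)

lemma P_sub: "P \<subseteq> bbox P" using xmin_le xmax_ge ymin_le ymax_ge by (auto simp: in_bbox)

lemma front_sub: "frontier (bbox P) \<subseteq> bbox P"
  using bbox_compact compact_imp_closed frontier_subset_closed by blast

lemma near_le:
  assumes a: "a \<in> P" and L: "isnear (rayv a \<inter> frontier (bbox P)) L"
  shows "dseg L e \<le> dseg a e"
proof -
  obtain t where t: "0 \<le> t" "t \<le> 1" "t *\<^sub>R a \<in> frontier (bbox P)"
    using front_below[OF zero_notin, of 1 a] a P_sub by auto
  have "t *\<^sub>R a \<in> rayv a" using t by (auto simp: rayv_def)
  hence nL: "norm L \<le> norm (t *\<^sub>R a)" using L t unfolding isnear_def by blast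
  obtain s where s: "s \<ge> 0" "L = s *\<^sub>R a" using L unfolding isnear_def rayv_def by blast
  have "a \<noteq> 0" using a q1 by force
  hence "s \<le> t" using nL s t by simp
  hence "s \<le> 1" using t by simp
  thus ?thesis using s dseg_scale by simp
qed

definition sc :: "pt \<Rightarrow> real" where
  "sc p = (if snd p * xmax P \<le> ymax P * fst p then xmax P / fst p else ymax P / snd p)"

lemma sc_props:
  assumes p: "p \<in> bbox P" "fst p > 0" "snd p \<ge> 0"
  shows "sc p \<ge> 1" "sc p *\<^sub>R p \<in> bbox P" "\<And>t. t > sc p \<Longrightarrow> t *\<^sub>R p \<notin> bbox P"
proof -
  have b: "xmin P \<le> fst p" "fst p \<le> xmax P" "ymin P \<le> snd p" "snd p \<le> ymax P"
    using p(1) by (auto simp: in_bbox)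
  have ymx: "ymax P \<ge> 0" using b p(3) by simp
  have "sc p \<ge> 1 \<and> sc p *\<^sub>R p \<in> bbox P \<and> (\<forall>t. t > sc p \<longrightarrow> t *\<^sub>R p \<notin> bbox P)"
  proof (cases "snd p * xmax P \<le> ymax P * fst p")
    case True
    hence s: "sc p = xmax P / fst p" by (simp add: sc_def)
    have s1: "sc p \<ge> 1" using s b p by simp
    have "snd p * (xmax P / fst p) \<le> ymax P" using True p by (simp add: field_simps)
    hence "snd p * sc p \<le> ymax P" using s by simp
    moreover have "snd p \<le> snd p * sc p" using s1 p(3) by (simp add: mult_le_cancel_left1)
    moreover have "fst p * sc p = xmax P" using s p by simp
    ultimately have "sc p *\<^sub>R p \<in> bbox P" using b xmm by (simp add: in_bbox mult.commute)
    moreover have "\<forall>t. t > sc p \<longrightarrow> t *\<^sub>R p \<notin> bbox P"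
    proof (intro allI impI)
      fix t assume "t > sc p"
      hence "t * fst p > xmax P" using s p by (simp add: field_simps)
      thus "t *\<^sub>R p \<notin> bbox P" by (simp add: in_bbox)
    qed
    ultimately show ?thesis using s1 by blast
  next
    case False
    have sp: "snd p > 0" using False p ymx
      by (metis mult_nonneg_nonneg mult_zero_left order_le_less)
    hence s: "sc p = ymax P / snd p" using False by (simp add: sc_def)
    have s1: "sc p \<ge> 1" using s b sp by simp
    have "fst p * (ymax P / snd p) \<le> xmax P" using False sp by (simp add: field_simps)
    hence "fst p * sc p \<le> xmax P" using s by simp
    moreover have "fst p \<le> fst p * sc p" using s1 p(2) by (simp add: mult_le_cancel_left1)
    moreover have "snd p * sc p = ymax P" using s sp by simp
    ultimately have "sc p *\<^sub>R p \<in> bbox P" using b ymm by (simp add: in_bbox mult.commute)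
    moreover have "\<forall>t. t > sc p \<longrightarrow> t *\<^sub>R p \<notin> bbox P"
    proof (intro allI impI)
      fix t assume "t > sc p"
      hence "t * snd p > ymax P" using s sp by (simp add: field_simps)
      thus "t *\<^sub>R p \<notin> bbox P" by (simp add: in_bbox)
    qed
    ultimately show ?thesis using s1 by blast
  qed
  thus "sc p \<ge> 1" "sc p *\<^sub>R p \<in> bbox P" "\<And>t. t > sc p \<Longrightarrow> t *\<^sub>R p \<notin> bbox P" by auto
qed

lemma far_eq:
  assumes a: "a \<in> P" and L: "isfar (rayv a \<inter> frontier (bbox P)) L"
  shows "L = sc a *\<^sub>R a"
proof -
  have ab: "a \<in> bbox P" "fst a > 0" "snd a \<ge> 0" using a P_sub q1 by auto
  note S = sc_props[OF ab]
  have a0: "a \<noteq> 0" using ab by auto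
  obtain t where t: "sc a \<le> t" "t *\<^sub>R a \<in> frontier (bbox P)"
    using front_above[OF compact_imp_bounded[OF bbox_compact] a0, of "sc a"] S(1,2) by auto
  have "t *\<^sub>R a \<in> rayv a" using t S(1) by (auto simp: rayv_def)
  hence nL: "norm (t *\<^sub>R a) \<le> norm L" using L t unfolding isfar_def by blast
  obtain s where s: "s \<ge> 0" "L = s *\<^sub>R a" using L unfolding isfar_def rayv_def by blast
  have "L \<in> bbox P" using L front_sub unfolding isfar_def by blast
  hence "\<not> s > sc a" using S(3) s by blast
  moreover have "t \<le> s" using nL s t S(1) a0 by simp
  ultimately show ?thesis using t s by simp
qed

end


lemma dseg_iso:
  assumes "linear T" "\<And>x. norm (T x) = norm x"
  shows "dseg (T p) (T e) = dseg p e"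
proof -
  have T0: "T 0 = 0" using assms(1) linear_0 by blast
  have seg: "closed_segment 0 (T e) = T ` closed_segment 0 e"
    using closed_segment_linear_image[OF assms(1), of 0 e] T0 by simp
  have d: "dist (T p) (T a) = dist p a" for a
    using assms by (simp add: dist_norm flip: linear_diff)
  have ne: "closed_segment (0::pt) e \<noteq> {}" by auto
  show ?thesis unfolding dseg_def seg infdist_def using ne
    by (simp add: image_image d)
qed

definition swp :: "pt \<Rightarrow> pt" where "swp p = (snd p, fst p)"

lemma swp_lin: "linear swp"
  unfolding swp_def by (intro linearI) (auto simp: algebra_simps)
lemma swp_norm: "norm (swp x) = norm x"
  unfolding swp_def by (cases x) (simp add: norm_Pair add.commute)
lemma dseg_swp: "dseg (y, x) (snd e, fst e) = dseg (x, y) e"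
  using dseg_iso[OF swp_lin swp_norm, of "(x,y)" e] by (simp add: swp_def)

lemma norm_sq: "(norm (x::pt))^2 = (fst x)^2 + (snd x)^2"
  by (cases x) (simp add: norm_Pair)

context q1set begin

lemma corner_near:
  assumes "isnear (corners P) c"
  shows "c = (xmin P, ymin P)"
proof -
  have cin: "fst c \<in> {xmin P, xmax P}" "snd c \<in> {ymin P, ymax P}"
    using assms by (cases c; auto simp: isnear_def corners_def)+
  have "(xmin P, ymin P) \<in> corners P" by (simp add: corners_def)
  hence "norm c \<le> norm (xmin P, ymin P)" using assms by (auto simp: isnear_def)
  hence le: "(fst c)^2 + (snd c)^2 \<le> (xmin P)^2 + (ymin P)^2"
    using norm_sq[of c] norm_sq[of "(xmin P, ymin P)"]
    by (metis fst_conv norm_ge_zero power_mono snd_conv)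
  have x1: "xmin P \<le> fst c" "ymin P \<le> snd c" using cin xmm ymm by auto
  have x0: "0 < xmin P" "0 \<le> ymin P" using xmin_pos ymin_nn by auto
  have "(xmin P)^2 \<le> (fst c)^2" "(ymin P)^2 \<le> (snd c)^2" using x1 x0 power_mono by auto
  hence "(fst c)^2 = (xmin P)^2" "(snd c)^2 = (ymin P)^2" using le by auto
  hence "fst c = xmin P" "snd c = ymin P" using x1 x0
    by (metis order_trans less_imp_le power2_eq_iff_nonneg)+
  thus ?thesis by (metis prod.collapse)
qed

lemma corner_far:
  assumes "isfar (corners P) c"
  shows "c = (xmax P, ymax P)"
proof -
  have cin: "fst c \<in> {xmin P, xmax P}" "snd c \<in> {ymin P, ymax P}"
    using assms by (cases c; auto simp: isfar_def corners_def)+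
  have "(xmax P, ymax P) \<in> corners P" by (simp add: corners_def)
  hence "norm (xmax P, ymax P) \<le> norm c" using assms by (auto simp: isfar_def)
  hence le: "(xmax P)^2 + (ymax P)^2 \<le> (fst c)^2 + (snd c)^2"
    using norm_sq[of c] norm_sq[of "(xmax P, ymax P)"]
    by (metis fst_conv norm_ge_zero power_mono snd_conv)
  have x1: "fst c \<le> xmax P" "snd c \<le> ymax P" using cin xmm ymm by auto
  have x0: "0 < fst c" "0 \<le> snd c" using cin xmin_pos ymin_nn xmm ymm by auto
  have "(fst c)^2 \<le> (xmax P)^2" "(snd c)^2 \<le> (ymax P)^2" using x1 x0 power_mono by auto
  hence "(fst c)^2 = (xmax P)^2" "(snd c)^2 = (ymax P)^2" using le by auto
  hence "fst c = xmax P" "snd c = ymax P" using x1 x0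
    by (metis order_trans less_imp_le power2_eq_iff_nonneg)+
  thus ?thesis by (metis prod.collapse)
qed

end


context q1set begin

lemma upper_pt:
  assumes p: "p \<in> P" and a: "a \<in> P" and b: "b \<in> P" and ca: "cr a p \<ge> 0" and cb: "cr p b \<ge> 0"
  shows "dseg p e \<le> max (dseg (sc a *\<^sub>R a) e) (max (dseg (sc b *\<^sub>R b) e) (dseg (xmax P, ymax P) e))"
proof -
  have pb: "p \<in> bbox P" "fst p > 0" "snd p \<ge> 0" using p P_sub q1 by auto
  have ab: "fst a > 0" "snd a \<ge> 0" "fst b > 0" "snd b \<ge> 0" using a b q1 by auto
  have pbx: "fst p \<le> xmax P" "snd p \<le> ymax P" using pb(1) by (auto simp: in_bbox)
  have xm: "xmax P > 0" using pb pbx by simp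
  have ym: "ymax P \<ge> 0" using pb pbx by simp
  note S = sc_props[OF pb]
  have "dseg p e = dseg ((1 / sc p) *\<^sub>R (sc p *\<^sub>R p)) e" using S(1) by simp
  also have "\<dots> \<le> dseg (sc p *\<^sub>R p) e" using S(1) by (intro dseg_scale) auto
  finally have step1: "dseg p e \<le> dseg (sc p *\<^sub>R p) e" .
  have h1: "fst a * snd p \<ge> snd a * fst p" using ca by (simp add: cr_def)
  have h2: "fst p * snd b \<ge> snd p * fst b" using cb by (simp add: cr_def)
  show ?thesis
  proof (cases "snd p * xmax P \<le> ymax P * fst p")
    case True
    have sp: "sc p = xmax P / fst p" using True by (simp add: sc_def)
    have Ta: "snd a * xmax P \<le> ymax P * fst a"
    proof (rule ccontr)
      assume "\<not> ?thesis"
      hence "snd a * xmax P * fst p > ymax P * fst a * fst p" using pb by simp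
      moreover have "fst a * snd p * xmax P \<ge> snd a * fst p * xmax P"
        using h1 xm by (simp add: mult_right_mono)
      moreover have "snd p * xmax P * fst a \<le> ymax P * fst p * fst a"
        using True ab by (simp add: mult_right_mono)
      ultimately show False by (simp add: algebra_simps)
    qed
    have sa: "sc a = xmax P / fst a" using Ta by (simp add: sc_def)
    have e1: "sc p *\<^sub>R p = (xmax P, snd p * xmax P / fst p)" using sp pb by (simp add: prod_eq_iff)
    have e2: "sc a *\<^sub>R a = (xmax P, snd a * xmax P / fst a)" using sa ab by (simp add: prod_eq_iff)
    have "snd a / fst a \<le> snd p / fst p" using h1 ab pb by (simp add: field_simps mult.commute)
    hence i1: "snd a * xmax P / fst a \<le> snd p * xmax P / fst p" using xm
      by (metis mult_right_mono less_imp_le times_divide_eq_left mult.commute)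
    have i2: "snd p * xmax P / fst p \<le> ymax P" using True pb by (simp add: field_simps)
    have "sc p *\<^sub>R p \<in> closed_segment (sc a *\<^sub>R a) (xmax P, ymax P)"
      unfolding e1 e2 by (rule seg_v[OF i1 i2])
    from dseg_seg[OF this, of e] step1 show ?thesis by linarith
  next
    case False
    have sp0: "snd p > 0" using False ym pb
      by (metis mult_nonneg_nonneg mult_zero_left order_le_less)
    have sp: "sc p = ymax P / snd p" using False by (simp add: sc_def)
    have Fb: "\<not> snd b * xmax P \<le> ymax P * fst b"
    proof
      assume Tb: "snd b * xmax P \<le> ymax P * fst b"
      have "snd p * xmax P * fst b > ymax P * fst p * fst b" using False ab by simp
      moreover have "fst p * snd b * xmax P \<ge> snd p * fst b * xmax P"
        using h2 xm by (simp add: mult_right_mono)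
      moreover have "snd b * xmax P * fst p \<le> ymax P * fst b * fst p"
        using Tb pb by (simp add: mult_right_mono)
      ultimately show False by (simp add: algebra_simps)
    qed
    have sb0: "snd b > 0" using Fb ym ab
      by (metis mult_nonneg_nonneg mult_zero_left order_le_less)
    have sb: "sc b = ymax P / snd b" using Fb by (simp add: sc_def)
    have e1: "sc p *\<^sub>R p = (fst p * ymax P / snd p, ymax P)" using sp sp0 by (simp add: prod_eq_iff)
    have e2: "sc b *\<^sub>R b = (fst b * ymax P / snd b, ymax P)" using sb sb0 by (simp add: prod_eq_iff)
    have "fst b / snd b \<le> fst p / snd p" using h2 sb0 sp0 by (simp add: field_simps mult.commute)
    hence i1: "fst b * ymax P / snd b \<le> fst p * ymax P / snd p" using ym
      by (metis mult_right_mono times_divide_eq_left mult.commute)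
    have i2: "fst p * ymax P / snd p \<le> xmax P" using False sp0 by (simp add: field_simps)
    have "sc p *\<^sub>R p \<in> closed_segment (sc b *\<^sub>R b) (xmax P, ymax P)"
      unfolding e1 e2 by (rule seg_h[OF i1 i2])
    from dseg_seg[OF this, of e] step1 show ?thesis by linarith
  qed
qed

lemma dpart_above:
  assumes ce: "\<forall>p\<in>P. cr p e > 0" and e: "fst e \<ge> 0" "snd e \<ge> 0"
  shows "\<exists>q\<in>P. dseg (xmin P, ymin P) e \<le> dseg q e"
    and "norm (xmax P, ymax P) \<le> norm e \<Longrightarrow> \<exists>q\<in>P. dseg (xmax P, ymax P) e \<le> dseg q e"
proof -
  obtain q where q: "q \<in> P" "snd q = ymin P" using ymin_in by blast
  obtain r where r: "r \<in> P" "fst r = xmin P" using xmin_in by blast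
  have "xmin P * snd e - snd r * fst e > 0" using ce r by (force simp: cr_def)
  moreover have "snd r * fst e \<ge> ymin P * fst e" using ymin_le[OF r(1)] e by (simp add: mult_right_mono)
  ultimately have c1: "xmin P * snd e > ymin P * fst e" by simp
  have "dseg (xmin P, ymin P) (fst e, snd e) \<le> dseg (fst q, ymin P) (fst e, snd e)"
    by (rule Dn) (use e ymin_nn c1 xmin_le[OF q(1)] in auto)
  hence "dseg (xmin P, ymin P) e \<le> dseg q e" using q by (metis prod.collapse)
  thus "\<exists>q\<in>P. dseg (xmin P, ymin P) e \<le> dseg q e" using q by blast
next
  assume nm: "norm (xmax P, ymax P) \<le> norm e"
  obtain q where q: "q \<in> P" "fst q = xmax P" using xmax_in by blast
  obtain r where r: "r \<in> P" "snd r = ymax P" using ymax_in by blast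
  have "fst r * snd e - ymax P * fst e > 0" using ce r by (force simp: cr_def)
  moreover have "fst r * snd e \<le> xmax P * snd e" using xmax_ge[OF r(1)] e by (simp add: mult_right_mono)
  ultimately have c1: "xmax P * snd e > ymax P * fst e" by simp
  have sq: "(xmax P)^2 + (ymax P)^2 \<le> (fst e)^2 + (snd e)^2"
    using nm norm_sq[of e] norm_sq[of "(xmax P, ymax P)"]
    by (metis fst_conv norm_ge_zero power_mono snd_conv)
  have "dseg (xmax P, ymax P) (fst e, snd e) \<le> dseg (xmax P, snd q) (fst e, snd e)"
    by (rule Df) (use e c1 sq ymax_ge[OF q(1)] xmin_pos xmm in auto)
  hence "dseg (xmax P, ymax P) e \<le> dseg q e" using q by (metis prod.collapse)
  thus "\<exists>q\<in>P. dseg (xmax P, ymax P) e \<le> dseg q e" using q by blast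
qed

lemma dpart_below:
  assumes ce: "\<forall>p\<in>P. cr e p > 0" and e: "fst e \<ge> 0" "snd e \<ge> 0"
  shows "\<exists>q\<in>P. dseg (xmin P, ymin P) e \<le> dseg q e"
    and "norm (xmax P, ymax P) \<le> norm e \<Longrightarrow> \<exists>q\<in>P. dseg (xmax P, ymax P) e \<le> dseg q e"
proof -
  obtain q where q: "q \<in> P" "fst q = xmin P" using xmin_in by blast
  obtain r where r: "r \<in> P" "snd r = ymin P" using ymin_in by blast
  have "fst e * ymin P - snd e * fst r > 0" using ce r by (force simp: cr_def)
  moreover have "snd e * fst r \<ge> snd e * xmin P" using xmin_le[OF r(1)] e by (simp add: mult_left_mono)
  ultimately have c1: "ymin P * fst e > xmin P * snd e" by (simp add: mult.commute)
  have "dseg (ymin P, xmin P) (snd e, fst e) \<le> dseg (snd q, xmin P) (snd e, fst e)"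
    by (rule Dn) (use e xmin_pos c1 ymin_le[OF q(1)] in auto)
  hence "dseg (xmin P, ymin P) e \<le> dseg (xmin P, snd q) e" by (simp add: dseg_swp)
  hence "dseg (xmin P, ymin P) e \<le> dseg q e" using q by (metis prod.collapse)
  thus "\<exists>q\<in>P. dseg (xmin P, ymin P) e \<le> dseg q e" using q by blast
next
  assume nm: "norm (xmax P, ymax P) \<le> norm e"
  obtain q where q: "q \<in> P" "snd q = ymax P" using ymax_in by blast
  obtain r where r: "r \<in> P" "fst r = xmax P" using xmax_in by blast
  have "fst e * snd r - snd e * xmax P > 0" using ce r by (force simp: cr_def)
  moreover have "fst e * snd r \<le> fst e * ymax P" using ymax_ge[OF r(1)] e by (simp add: mult_left_mono)
  ultimately have c1: "ymax P * fst e > xmax P * snd e" by (simp add: mult.commute)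
  have sq: "(ymax P)^2 + (xmax P)^2 \<le> (snd e)^2 + (fst e)^2"
    using nm norm_sq[of e] norm_sq[of "(xmax P, ymax P)"]
    by (smt (verit) fst_conv norm_ge_zero power_mono snd_conv)
  have ymx: "0 \<le> ymax P" using ymin_nn ymm by simp
  have "dseg (ymax P, xmax P) (snd e, fst e) \<le> dseg (ymax P, fst q) (snd e, fst e)"
    by (rule Df) (use e c1 sq xmax_ge[OF q(1)] ymx in auto)
  hence "dseg (xmax P, ymax P) e \<le> dseg (fst q, ymax P) e" by (simp add: dseg_swp)
  hence "dseg (xmax P, ymax P) e \<le> dseg q e" using q by (metis prod.collapse)
  thus "\<exists>q\<in>P. dseg (xmax P, ymax P) e \<le> dseg q e" using q by blast
qed

end


lemma core:
  assumes Q: "q1set P" and e: "fst e \<ge> 0" "snd e \<ge> 0"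
    and a: "a \<in> P" and b: "b \<in> P" and ca: "\<forall>p\<in>P. cr a p \<ge> 0" and cb: "\<forall>p\<in>P. cr p b \<ge> 0"
    and ce: "(\<forall>p\<in>P. cr p e > 0) \<or> (\<forall>p\<in>P. cr e p > 0)"
    and L1: "isnear (rayv a \<inter> frontier (bbox P)) L1" and L2: "isfar (rayv a \<inter> frontier (bbox P)) L2"
    and U1: "isnear (rayv b \<inter> frontier (bbox P)) U1" and U2: "isfar (rayv b \<inter> frontier (bbox P)) U2"
    and CN: "isnear (corners P) CN" and CF: "isfar (corners P) CF"
  shows "Max ((\<lambda>p. dseg p e) ` P) \<ge>
           max (min (dseg L1 e) (dseg L2 e))
             (max (min (dseg U1 e) (dseg U2 e))
                  (if norm e < norm CF then dseg CN e else dseg CF e))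
       \<and> Max ((\<lambda>p. dseg p e) ` P) \<le>
           max (dseg L1 e) (max (dseg L2 e) (max (dseg U1 e)
             (max (dseg U2 e) (dseg CF e))))"
proof -
  interpret q1set P by (rule Q)
  define M where "M = Max ((\<lambda>p. dseg p e) ` P)"
  have Mge: "q \<in> P \<Longrightarrow> dseg q e \<le> M" for q unfolding M_def using fin by auto
  have cn: "CN = (xmin P, ymin P)" by (rule corner_near[OF CN])
  have cf: "CF = (xmax P, ymax P)" by (rule corner_far[OF CF])
  have l1: "min (dseg L1 e) (dseg L2 e) \<le> M" using near_le[OF a L1, of e] Mge[OF a] by linarith
  have u1: "min (dseg U1 e) (dseg U2 e) \<le> M" using near_le[OF b U1, of e] Mge[OF b] by linarith
  have d: "(if norm e < norm CF then dseg CN e else dseg CF e) \<le> M"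
  proof (cases "norm e < norm CF")
    case True
    have "\<exists>q\<in>P. dseg (xmin P, ymin P) e \<le> dseg q e"
      using ce dpart_above(1)[OF _ e] dpart_below(1)[OF _ e] by blast
    thus ?thesis using True cn Mge by force
  next
    case False
    hence nm: "norm (xmax P, ymax P) \<le> norm e" using cf by simp
    have "\<exists>q\<in>P. dseg (xmax P, ymax P) e \<le> dseg q e"
      using ce dpart_above(2)[OF _ e nm] dpart_below(2)[OF _ e nm] by blast
    thus ?thesis using False cf Mge by force
  qed
  have l2: "L2 = sc a *\<^sub>R a" by (rule far_eq[OF a L2])
  have u2: "U2 = sc b *\<^sub>R b" by (rule far_eq[OF b U2])
  have up: "M \<le> max (dseg L2 e) (max (dseg U2 e) (dseg CF e))"
    unfolding M_def using fin ne
  proof (subst Max_le_iff, simp_all, intro ballI)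
    fix p assume "p \<in> P"
    thus "dseg p e \<le> max (dseg L2 e) (max (dseg U2 e) (dseg CF e))"
      using upper_pt[OF _ a b, of p e] ca cb l2 u2 cf by auto
  qed
  show ?thesis using l1 u1 d up unfolding M_def[symmetric] by auto
qed



lemma polar: "fst p = norm p * cos (theta p) \<and> snd p = norm p * sin (theta p)"
proof -
  define z where "z = Complex (fst p) (snd p)"
  have "is_Arg z (Arg2pi z)" using Arg2pi by blast
  hence zz: "z = of_real (cmod z) * cis (Arg2pi z)" by (simp add: is_Arg_def cis_conv_exp)
  have nz: "cmod z = norm p" unfolding z_def by (cases p) (simp add: complex_norm norm_Pair)
  have "Re z = cmod z * cos (Arg2pi z)" "Im z = cmod z * sin (Arg2pi z)"
    using arg_cong[OF zz, of Re] arg_cong[OF zz, of Im] by simp_all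
  thus ?thesis unfolding theta_def using nz by (simp add: z_def)
qed

lemma quad_D: "p \<in> quadrant k \<Longrightarrow> p \<noteq> 0 \<and> (real k - 1) * pi / 2 \<le> theta p \<and> theta p < real k * pi / 2"
  by (simp add: quadrant_def)

lemma cr_polar: "cr p q = norm p * norm q * sin (theta q - theta p)"
  using polar[of p] polar[of q] by (simp add: cr_def sin_diff algebra_simps)

lemma cr_theta_le:
  assumes "p \<in> quadrant k" "q \<in> quadrant k" "theta p \<le> theta q"
  shows "cr p q \<ge> 0"
proof -
  have "theta q - theta p \<le> pi" using quad_D[OF assms(1)] quad_D[OF assms(2)] by (simp add: field_simps)
  hence "sin (theta q - theta p) \<ge> 0" using assms(3) by (intro sin_ge_zero) auto
  thus ?thesis by (simp add: cr_polar)
qed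

lemma cr_theta_less:
  assumes "p \<in> quadrant k" "q \<in> quadrant k" "theta p < theta q"
  shows "cr p q > 0"
proof -
  have "theta q - theta p < pi" using quad_D[OF assms(1)] quad_D[OF assms(2)] by (simp add: field_simps)
  hence "sin (theta q - theta p) > 0" using assms(3) by (intro sin_gt_zero) auto
  moreover have "norm p > 0" "norm q > 0" using quad_D[OF assms(1)] quad_D[OF assms(2)] by auto
  ultimately show ?thesis by (simp add: cr_polar)
qed

lemma ray_eq: "p \<noteq> 0 \<Longrightarrow> ray (theta p) = rayv p"
proof -
  assume p: "p \<noteq> 0"
  have pp: "p = norm p *\<^sub>R (cos (theta p), sin (theta p))" using polar[of p] by (simp add: prod_eq_iff)
  have np: "norm p > 0" using p by simp
  show ?thesis unfolding ray_def rayv_def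
  proof (intro set_eqI iffI)
    fix x assume "x \<in> {r *\<^sub>R (cos (theta p), sin (theta p)) |r. 0 \<le> r}"
    then obtain r where r: "r \<ge> 0" "x = r *\<^sub>R (cos (theta p), sin (theta p))" by blast
    have "x = (r / norm p) *\<^sub>R p" using r np by (subst pp) simp
    thus "x \<in> {t *\<^sub>R p |t. 0 \<le> t}" using r np by auto
  next
    fix x assume "x \<in> {t *\<^sub>R p |t. 0 \<le> t}"
    then obtain t where t: "t \<ge> 0" "x = t *\<^sub>R p" by blast
    have "x = (t * norm p) *\<^sub>R (cos (theta p), sin (theta p))" using t by (subst (asm) pp) simp
    thus "x \<in> {r *\<^sub>R (cos (theta p), sin (theta p)) |r. 0 \<le> r}" using t np by auto
  qed
qed

definition cq :: "nat \<Rightarrow> real" where "cq k = (if k = 1 then 1 else if k = 3 then -1 else 0)"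
definition sq :: "nat \<Rightarrow> real" where "sq k = (if k = 2 then 1 else if k = 4 then -1 else 0)"
definition Tq :: "nat \<Rightarrow> pt \<Rightarrow> pt" where
  "Tq k p = (cq k * fst p + sq k * snd p, cq k * snd p - sq k * fst p)"

lemma cs_trig:
  assumes "k \<in> {1..4}"
  shows "cq k = cos ((real k - 1) * pi / 2) \<and> sq k = sin ((real k - 1) * pi / 2)"
proof -
  have "k = 1 \<or> k = 2 \<or> k = 3 \<or> k = 4" using assms by auto
  moreover have "cos (3 * pi / 2) = 0" "sin (3 * pi / 2) = -1"
    using cos_3over2_pi sin_3over2_pi by (simp_all add: mult.commute)
  ultimately show ?thesis by (auto simp: cq_def sq_def)
qed

lemma cs_sq: "k \<in> {1..4} \<Longrightarrow> (cq k)^2 + (sq k)^2 = 1"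
  using cs_trig[of k] by simp

lemma Tq_polar:
  assumes "k \<in> {1..4}"
  shows "Tq k p = norm p *\<^sub>R (cos (theta p - (real k - 1) * pi / 2), sin (theta p - (real k - 1) * pi / 2))"
  using cs_trig[OF assms] polar[of p]
  by (simp add: Tq_def cos_diff sin_diff algebra_simps prod_eq_iff)

lemma quad_T:
  assumes "k \<in> {1..4}" "p \<in> quadrant k"
  shows "fst (Tq k p) > 0 \<and> snd (Tq k p) \<ge> 0"
proof -
  define phi where "phi = theta p - (real k - 1) * pi / 2"
  have ph: "0 \<le> phi" "phi < pi / 2" using quad_D[OF assms(2)] by (auto simp: phi_def field_simps)
  have "cos phi > 0" using ph by (intro cos_gt_zero_pi) auto
  moreover have "sin phi \<ge> 0" using ph sin_ge_zero[of phi] by linarith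
  moreover have "norm p > 0" using quad_D[OF assms(2)] by simp
  ultimately show ?thesis using Tq_polar[OF assms(1), of p] by (simp add: phi_def)
qed

lemma Tq_lin: "linear (Tq k)"
  unfolding Tq_def by (intro linearI) (auto simp: algebra_simps)

lemma Tq_norm: "k \<in> {1..4} \<Longrightarrow> norm (Tq k p) = norm p"
proof -
  assume k: "k \<in> {1..4}"
  have "(norm (Tq k p))^2 = ((cq k)^2 + (sq k)^2) * ((fst p)^2 + (snd p)^2)"
    unfolding norm_sq[of "Tq k p"] by (simp add: Tq_def power2_eq_square algebra_simps)
  hence "(norm (Tq k p))^2 = ((cq k)^2 + (sq k)^2) * (norm p)^2" by (simp add: norm_sq)
  hence "(norm (Tq k p))^2 = (norm p)^2" using cs_sq[OF k] by simp
  thus ?thesis by (simp add: power2_eq_iff_nonneg)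
qed

lemma Tq_cr: "k \<in> {1..4} \<Longrightarrow> cr (Tq k p) (Tq k q) = cr p q"
proof -
  assume k: "k \<in> {1..4}"
  have "cr (Tq k p) (Tq k q) = ((cq k)^2 + (sq k)^2) * cr p q"
    by (simp add: cr_def Tq_def power2_eq_square algebra_simps)
  thus ?thesis using cs_sq[OF k] by simp
qed

lemma Tq_inj: "k \<in> {1..4} \<Longrightarrow> inj (Tq k)"
proof (rule injI)
  fix x y assume k: "k \<in> {1..4}" and "Tq k x = Tq k y"
  hence "Tq k (x - y) = 0" using Tq_lin[of k] by (simp add: linear_diff)
  hence "norm (x - y) = 0" using Tq_norm[OF k, of "x - y"] by simp
  thus "x = y" by simp
qed



lemma in_bbox_g: "q \<in> bbox P \<longleftrightarrow> xmin P \<le> fst q \<and> fst q \<le> xmax P \<and> ymin P \<le> snd q \<and> snd q \<le> ymax P"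
  by (cases q) (simp add: bbox_def)

lemma in_corners_g: "q \<in> corners P \<longleftrightarrow> (fst q = xmin P \<or> fst q = xmax P) \<and> (snd q = ymin P \<or> snd q = ymax P)"
  by (cases q) (auto simp: corners_def)

lemma Min_neg: "finite (A::real set) \<Longrightarrow> A \<noteq> {} \<Longrightarrow> Min (uminus ` A) = - Max A"
  by (rule Min_eqI) auto
lemma Max_neg: "finite (A::real set) \<Longrightarrow> A \<noteq> {} \<Longrightarrow> Max (uminus ` A) = - Min A"
  by (rule Max_eqI) auto

definition Ti :: "nat \<Rightarrow> pt \<Rightarrow> pt" where
  "Ti k p = (cq k * fst p - sq k * snd p, cq k * snd p + sq k * fst p)"

lemma Ti_Tq: "k \<in> {1..4} \<Longrightarrow> Ti k (Tq k x) = x"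
proof -
  assume k: "k \<in> {1..4}"
  have "Ti k (Tq k x) = (((cq k)^2 + (sq k)^2) * fst x, ((cq k)^2 + (sq k)^2) * snd x)"
    by (simp add: Ti_def Tq_def power2_eq_square algebra_simps)
  thus ?thesis using cs_sq[OF k] by simp
qed

lemma Tq_Ti: "k \<in> {1..4} \<Longrightarrow> Tq k (Ti k x) = x"
proof -
  assume k: "k \<in> {1..4}"
  have "Tq k (Ti k x) = (((cq k)^2 + (sq k)^2) * fst x, ((cq k)^2 + (sq k)^2) * snd x)"
    by (simp add: Ti_def Tq_def power2_eq_square algebra_simps)
  thus ?thesis using cs_sq[OF k] by simp
qed

lemma in_Tq_img: "k \<in> {1..4} \<Longrightarrow> x \<in> Tq k ` S \<longleftrightarrow> Ti k x \<in> S"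
  by (metis Ti_Tq Tq_Ti image_iff)

lemma ext_Tq:
  assumes k: "k \<in> {1..4}" and fin: "finite P" and ne: "P \<noteq> {}"
  shows "\<forall>x. (x \<in> bbox (Tq k ` P) \<longleftrightarrow> Ti k x \<in> bbox P) \<and> (x \<in> corners (Tq k ` P) \<longleftrightarrow> Ti k x \<in> corners P)"
proof -
  have fi: "finite (fst ` P)" "finite (snd ` P)" "fst ` P \<noteq> {}" "snd ` P \<noteq> {}" using fin ne by auto
  have k4: "k = 1 \<or> k = 2 \<or> k = 3 \<or> k = 4" using k by auto
  moreover
  { assume "k = 1"
    hence T: "Tq k = id" "Ti k = id" by (auto simp: Tq_def Ti_def cq_def sq_def fun_eq_iff)
    have ?thesis unfolding T by simp }
  moreover
  { assume kk: "k = 2"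
    have f: "fst ` Tq k ` P = snd ` P" "snd ` Tq k ` P = uminus ` fst ` P"
      unfolding image_image using kk by (simp_all add: Tq_def cq_def sq_def)
    have e: "xmin (Tq k ` P) = ymin P" "xmax (Tq k ` P) = ymax P"
            "ymin (Tq k ` P) = - xmax P" "ymax (Tq k ` P) = - xmin P"
      unfolding xmin_def xmax_def ymin_def ymax_def f using Min_neg Max_neg fi by auto
    have ti: "Ti k x = (- snd x, fst x)" for x using kk by (simp add: Ti_def cq_def sq_def)
    have ?thesis unfolding in_bbox_g in_corners_g e ti by auto }
  moreover
  { assume kk: "k = 3"
    have f: "fst ` Tq k ` P = uminus ` fst ` P" "snd ` Tq k ` P = uminus ` snd ` P"
      unfolding image_image using kk by (simp_all add: Tq_def cq_def sq_def)
    have e: "xmin (Tq k ` P) = - xmax P" "xmax (Tq k ` P) = - xmin P"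
            "ymin (Tq k ` P) = - ymax P" "ymax (Tq k ` P) = - ymin P"
      unfolding xmin_def xmax_def ymin_def ymax_def f using Min_neg Max_neg fi by auto
    have ti: "Ti k x = (- fst x, - snd x)" for x using kk by (simp add: Ti_def cq_def sq_def)
    have ?thesis unfolding in_bbox_g in_corners_g e ti by auto }
  moreover
  { assume kk: "k = 4"
    have f: "fst ` Tq k ` P = uminus ` snd ` P" "snd ` Tq k ` P = fst ` P"
      unfolding image_image using kk by (simp_all add: Tq_def cq_def sq_def)
    have e: "xmin (Tq k ` P) = - ymax P" "xmax (Tq k ` P) = - ymin P"
            "ymin (Tq k ` P) = xmin P" "ymax (Tq k ` P) = xmax P"
      unfolding xmin_def xmax_def ymin_def ymax_def f using Min_neg Max_neg fi by auto
    have ti: "Ti k x = (snd x, - fst x)" for x using kk by (simp add: Ti_def cq_def sq_def)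
    have ?thesis unfolding in_bbox_g in_corners_g e ti by auto }
  ultimately show ?thesis by blast
qed

lemma bbox_Tq: "k \<in> {1..4} \<Longrightarrow> finite P \<Longrightarrow> P \<noteq> {} \<Longrightarrow> bbox (Tq k ` P) = Tq k ` bbox P"
  using ext_Tq in_Tq_img by blast

lemma corners_Tq: "k \<in> {1..4} \<Longrightarrow> finite P \<Longrightarrow> P \<noteq> {} \<Longrightarrow> corners (Tq k ` P) = Tq k ` corners P"
  using ext_Tq in_Tq_img by blast

lemma frontier_Tq: "k \<in> {1..4} \<Longrightarrow> frontier (Tq k ` S) = Tq k ` frontier S"
proof -
  assume k: "k \<in> {1..4}"
  note L = Tq_lin[of k] Tq_inj[OF k]
  show ?thesis unfolding frontier_def
    using closure_injective_linear_image[OF L, of S] interior_injective_linear_image[OF L, of S]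
      image_set_diff[OF L(2)] by simp
qed

lemma rayv_img: "rayv a = (\<lambda>t. t *\<^sub>R a) ` {0..}" unfolding rayv_def by auto

lemma rayv_Tq: "rayv (Tq k a) = Tq k ` rayv a"
proof -
  have "Tq k (t *\<^sub>R a) = t *\<^sub>R Tq k a" for t using Tq_lin[of k] linear_scale by blast
  thus ?thesis unfolding rayv_img image_image by simp
qed

lemma isnear_Tq: "k \<in> {1..4} \<Longrightarrow> isnear S c \<Longrightarrow> isnear (Tq k ` S) (Tq k c)"
  unfolding isnear_def by (auto simp: Tq_norm)
lemma isfar_Tq: "k \<in> {1..4} \<Longrightarrow> isfar S c \<Longrightarrow> isfar (Tq k ` S) (Tq k c)"
  unfolding isfar_def by (auto simp: Tq_norm)

lemma near_ex: "compact S \<Longrightarrow> S \<noteq> {} \<Longrightarrow> isnear S (nearest S)"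
proof -
  assume "compact S" "S \<noteq> {}"
  then obtain x where "x \<in> S" "\<forall>y\<in>S. norm x \<le> norm y"
    using continuous_attains_inf[of S norm] continuous_on_norm_id by blast
  hence "\<exists>c. c \<in> S \<and> (\<forall>c'\<in>S. norm c \<le> norm c')" by blast
  from someI_ex[OF this] show ?thesis unfolding isnear_def nearest_def .
qed

lemma far_ex: "compact S \<Longrightarrow> S \<noteq> {} \<Longrightarrow> isfar S (farthest S)"
proof -
  assume "compact S" "S \<noteq> {}"
  then obtain x where "x \<in> S" "\<forall>y\<in>S. norm y \<le> norm x"
    using continuous_attains_sup[of S norm] continuous_on_norm_id by blast
  hence "\<exists>c. c \<in> S \<and> (\<forall>c'\<in>S. norm c' \<le> norm c)" by blast
  from someI_ex[OF this] show ?thesis unfolding isfar_def farthest_def .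
qed

lemma rayv_closed: "a \<noteq> 0 \<Longrightarrow> closed (rayv a)"
proof -
  assume a: "a \<noteq> 0"
  have "rayv a = (\<lambda>t. t *\<^sub>R a) ` {0..}" by (rule rayv_img)
  moreover have "linear (\<lambda>t::real. t *\<^sub>R a)" by (simp add: bounded_linear.linear bounded_linear_scaleR_left)
  moreover have "inj (\<lambda>t::real. t *\<^sub>R a)" using a by (auto simp: inj_def)
  ultimately show ?thesis using closed_injective_linear_image[OF closed_atLeast] by metis
qed

lemma bbox_compact_g: "compact (bbox P)"
proof -
  have "bbox P = {xmin P..xmax P} \<times> {ymin P..ymax P}" by (auto simp: in_bbox_g)
  thus ?thesis by (simp add: compact_Times)
qed



lemma P_sub_g: "finite P \<Longrightarrow> P \<subseteq> bbox P"
proof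
  fix p assume "finite P" "p \<in> P"
  thus "p \<in> bbox P" unfolding in_bbox_g xmin_def xmax_def ymin_def ymax_def
    by (intro conjI Min_le Max_ge) auto
qed

lemma ray_near_far:
  assumes k: "k \<in> {1..4}" and fin: "finite P" and ne: "P \<noteq> {}"
    and a: "a \<in> P" and a0: "a \<noteq> 0" and z: "(0::pt) \<notin> bbox P"
  shows "isnear (rayv (Tq k a) \<inter> frontier (bbox (Tq k ` P))) (Tq k (nearest (rayv a \<inter> frontier (bbox P))))"
    and "isfar (rayv (Tq k a) \<inter> frontier (bbox (Tq k ` P))) (Tq k (farthest (rayv a \<inter> frontier (bbox P))))"
proof -
  let ?K = "rayv a \<inter> frontier (bbox P)"
  have cK: "compact ?K"
    by (intro closed_Int_compact rayv_closed a0 compact_frontier bbox_compact_g)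
  obtain t where "0 \<le> t" "t \<le> 1" "t *\<^sub>R a \<in> frontier (bbox P)"
    using front_below[OF z, of 1 a] a P_sub_g[OF fin] by auto
  hence neK: "?K \<noteq> {}" by (auto simp: rayv_def)
  have eq: "rayv (Tq k a) \<inter> frontier (bbox (Tq k ` P)) = Tq k ` ?K"
    using bbox_Tq[OF k fin ne] frontier_Tq[OF k] rayv_Tq[of k a] image_Int[OF Tq_inj[OF k]] by simp
  show "isnear (rayv (Tq k a) \<inter> frontier (bbox (Tq k ` P))) (Tq k (nearest ?K))"
    unfolding eq by (rule isnear_Tq[OF k near_ex[OF cK neK]])
  show "isfar (rayv (Tq k a) \<inter> frontier (bbox (Tq k ` P))) (Tq k (farthest ?K))"
    unfolding eq by (rule isfar_Tq[OF k far_ex[OF cK neK]])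
qed

theorem theorem4:
  fixes P :: "pt set" and e :: pt and k :: nat
  assumes "k \<in> {1..4}"
    and "finite P" and "P \<noteq> {}" and "P \<subseteq> quadrant k"
    and "e \<noteq> 0" and "e \<in> quadrant k"
    and "theta e > theta_ub P \<or> theta e < theta_lb P"
  shows "Max ((\<lambda>p. dseg p e) ` P) \<ge>
           max (min (dseg (l1 P) e) (dseg (l2 P) e))
             (max (min (dseg (u1 P) e) (dseg (u2 P) e))
                  (if norm e < norm (c_f P) then dseg (c_n P) e else dseg (c_f P) e))
       \<and> Max ((\<lambda>p. dseg p e) ` P) \<le>
           max (dseg (l1 P) e) (max (dseg (l2 P) e) (max (dseg (u1 P) e)
             (max (dseg (u2 P) e) (dseg (c_f P) e))))"
proof -
  note k = assms(1) and fin = assms(2) and ne = assms(3) and sub = assms(4)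
  let ?T = "Tq k"
  have D: "dseg (?T x) (?T y) = dseg x y" for x y
    by (rule dseg_iso[OF Tq_lin Tq_norm[OF k]])
  have Q: "q1set (?T ` P)"
    unfolding q1set_def using fin ne quad_T[OF k] sub by auto
  have eT: "fst (?T e) \<ge> 0" "snd (?T e) \<ge> 0" using quad_T[OF k assms(6)] by auto
  obtain a where a: "a \<in> P" "theta a = theta_lb P"
    unfolding theta_lb_def using fin ne by (metis (mono_tags, lifting) Min_in finite_imageI image_iff image_is_empty)
  obtain b where b: "b \<in> P" "theta b = theta_ub P"
    unfolding theta_ub_def using fin ne by (metis (mono_tags, lifting) Max_in finite_imageI image_iff image_is_empty)
  have a0: "a \<noteq> 0" "b \<noteq> 0" using a b sub quad_D by blast+
  have ra: "ray (theta_lb P) = rayv a" using ray_eq[OF a0(1)] a by simp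
  have rb: "ray (theta_ub P) = rayv b" using ray_eq[OF a0(2)] b by simp
  have "(0::pt) \<notin> ?T ` bbox P" using q1set.zero_notin[OF Q] bbox_Tq[OF k fin ne] by simp
  hence z: "(0::pt) \<notin> bbox P" using linear_0[OF Tq_lin] by force
  have L1: "isnear (rayv (?T a) \<inter> frontier (bbox (?T ` P))) (?T (l1 P))"
    unfolding l1_def ra by (rule ray_near_far(1)[OF k fin ne a(1) a0(1) z])
  have L2: "isfar (rayv (?T a) \<inter> frontier (bbox (?T ` P))) (?T (l2 P))"
    unfolding l2_def ra by (rule ray_near_far(2)[OF k fin ne a(1) a0(1) z])
  have U1: "isnear (rayv (?T b) \<inter> frontier (bbox (?T ` P))) (?T (u1 P))"
    unfolding u1_def rb by (rule ray_near_far(1)[OF k fin ne b(1) a0(2) z])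
  have U2: "isfar (rayv (?T b) \<inter> frontier (bbox (?T ` P))) (?T (u2 P))"
    unfolding u2_def rb by (rule ray_near_far(2)[OF k fin ne b(1) a0(2) z])
  have cc: "compact (corners P)" "corners P \<noteq> {}"
    by (auto simp: corners_def intro!: finite_imp_compact)
  have CN: "isnear (corners (?T ` P)) (?T (c_n P))"
    unfolding c_n_def corners_Tq[OF k fin ne] by (rule isnear_Tq[OF k near_ex[OF cc]])
  have CF: "isfar (corners (?T ` P)) (?T (c_f P))"
    unfolding c_f_def corners_Tq[OF k fin ne] by (rule isfar_Tq[OF k far_ex[OF cc]])
  have ca: "\<forall>p\<in>?T ` P. cr (?T a) p \<ge> 0"
  proof
    fix p assume "p \<in> ?T ` P"
    then obtain q where q: "q \<in> P" "p = ?T q" by blast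
    have "theta a \<le> theta q" using a q fin unfolding theta_lb_def by simp
    thus "cr (?T a) p \<ge> 0" using q Tq_cr[OF k] cr_theta_le sub a by (metis subsetD)
  qed
  have cb: "\<forall>p\<in>?T ` P. cr p (?T b) \<ge> 0"
  proof
    fix p assume "p \<in> ?T ` P"
    then obtain q where q: "q \<in> P" "p = ?T q" by blast
    have "theta q \<le> theta b" using b q fin unfolding theta_ub_def by simp
    thus "cr p (?T b) \<ge> 0" using q Tq_cr[OF k] cr_theta_le sub b by (metis subsetD)
  qed
  have ce: "(\<forall>p\<in>?T ` P. cr p (?T e) > 0) \<or> (\<forall>p\<in>?T ` P. cr (?T e) p > 0)"
    using assms(7)
  proof
    assume h: "theta e > theta_ub P"
    have "\<forall>q\<in>P. cr (?T q) (?T e) > 0"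
    proof
      fix q assume q: "q \<in> P"
      have "theta q \<le> theta_ub P" using q fin unfolding theta_ub_def by simp
      hence "theta q < theta e" using h by simp
      thus "cr (?T q) (?T e) > 0" using Tq_cr[OF k] cr_theta_less sub q assms(6) by (metis subsetD)
    qed
    thus ?thesis by blast
  next
    assume h: "theta e < theta_lb P"
    have "\<forall>q\<in>P. cr (?T e) (?T q) > 0"
    proof
      fix q assume q: "q \<in> P"
      have "theta_lb P \<le> theta q" using q fin unfolding theta_lb_def by simp
      hence "theta e < theta q" using h by simp
      thus "cr (?T e) (?T q) > 0" using Tq_cr[OF k] cr_theta_less sub q assms(6) by (metis subsetD)
    qed
    thus ?thesis by blast
  qed
  have C: "Max ((\<lambda>p. dseg p (?T e)) ` ?T ` P) \<ge>
           max (min (dseg (?T (l1 P)) (?T e)) (dseg (?T (l2 P)) (?T e)))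
             (max (min (dseg (?T (u1 P)) (?T e)) (dseg (?T (u2 P)) (?T e)))
                  (if norm (?T e) < norm (?T (c_f P)) then dseg (?T (c_n P)) (?T e) else dseg (?T (c_f P)) (?T e)))
       \<and> Max ((\<lambda>p. dseg p (?T e)) ` ?T ` P) \<le>
           max (dseg (?T (l1 P)) (?T e)) (max (dseg (?T (l2 P)) (?T e)) (max (dseg (?T (u1 P)) (?T e))
             (max (dseg (?T (u2 P)) (?T e)) (dseg (?T (c_f P)) (?T e)))))"
    by (rule core[OF Q eT imageI[OF a(1)] imageI[OF b(1)] ca cb ce L1 L2 U1 U2 CN CF])
  have M: "Max ((\<lambda>p. dseg p (?T e)) ` ?T ` P) = Max ((\<lambda>p. dseg p e) ` P)"
    unfolding image_image D ..
  show ?thesis using C unfolding M D Tq_norm[OF k] .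
qed

end
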